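(* Let $G=([N],\mathcal{E})$ be an undirected graph with Laplacian eigenvalues $0=\lambda_1\le\dots\le\lambda_N$, $\sigma\in(0,1)^N$, $c>0$, $q\in(0,1)$; let $d_i=\frac{\sigma_i}{|N(i)|+1}$, $m=\min_id_i$, $M=\max_id_i$, and assume $\lambda_2>0$ and $\lambda_NM^2<2m$. Let $\gamma_i=\frac{|N(i)|+1}{\sigma_i}$ and $\tilde d=\frac{\sum_i(|N(i)|+1)^2}{(\sum_i\gamma_i)^2}$. Then for every initial state $\theta(0)\in\mathbb{R}^N$ and every $b\in(0,1)$, with probability at least $1-b$ the limits $\lim_{t\to\infty}\theta_i(t)$ exist and equal a common value $\theta^*$ with $$\Big|\theta^*-\frac{\sum_i\gamma_i\theta_i(0)}{\sum_i\gamma_i}\Big|\le\frac{\sqrt{2\tilde d}\,c}{\sqrt{b(1-q^2)}}.$$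
   Context: $N(i)=\{j:(i,j)\in\mathcal{E}\}$; Laplacian $L$ has $L_{ii}=|N(i)|$, $L_{ij}=-1$ if $(i,j)\in\mathcal{E}$, $0$ otherwise. Distributed mechanism with parameters $\sigma\in(0,1)^N$, $c>0$, $q\in(0,1)$: at each round $t=0,1,2,\dots$, client $i$ sends $x_i(t)=\theta_i(t)+\eta_i(t)$ to each neighbor, where the $\eta_i(t)$ are mutually independent, Laplace distributed with density $\frac{1}{2cq^t}e^{-|x|/(cq^t)}$ (mean $0$, variance $2c^2q^{2t}$); client $i$ sets $y_i(t)=\frac{1}{|N(i)|+1}\sum_{j\in N(i)\cup\{i\}}x_j(t)$ and then $\theta_i(t+1)=(1-\sigma_i)\theta_i(t)+\sigma_iy_i(t)$. *)

theory Defs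
  imports "HOL-Probability.Probability" "Jordan_Normal_Form.Char_Poly"
begin

definition nbr :: "(nat \<times> nat) set \<Rightarrow> nat \<Rightarrow> nat set" where
  "nbr E i = {j. (i, j) \<in> E}"

definition undirected_graph :: "nat \<Rightarrow> (nat \<times> nat) set \<Rightarrow> bool" where
  "undirected_graph N E \<longleftrightarrow> E \<subseteq> {0..<N} \<times> {0..<N} \<and>
     (\<forall>i j. (i, j) \<in> E \<longrightarrow> (j, i) \<in> E) \<and> (\<forall>i. (i, i) \<notin> E)"

definition laplacian :: "nat \<Rightarrow> (nat \<times> nat) set \<Rightarrow> real mat" where
  "laplacian N E = mat N N (\<lambda>(i, j). if i = j then real (card (nbr E i))
                                      else if (i, j) \<in> E then -1 else 0)"

text \<open>lams is the list of Laplacian eigenvalues (with multiplicity) in nondecreasing order: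
  lams ! 0 = lambda_1, ..., lams ! (N-1) = lambda_N.\<close>
definition laplacian_eigenvalues :: "nat \<Rightarrow> (nat \<times> nat) set \<Rightarrow> real list \<Rightarrow> bool" where
  "laplacian_eigenvalues N E lams \<longleftrightarrow> length lams = N \<and> sorted lams \<and>
     char_poly (laplacian N E) = prod_list (map (\<lambda>a. [:- a, 1:]) lams)"

text \<open>State of the mechanism: theta_state N E sigma th0 eta t i = theta_i(t), given the
  realised noise eta j t = eta_j(t).\<close>
primrec theta_state :: "nat \<Rightarrow> (nat \<times> nat) set \<Rightarrow> (nat \<Rightarrow> real) \<Rightarrow> (nat \<Rightarrow> real) \<Rightarrow>
    (nat \<Rightarrow> nat \<Rightarrow> real) \<Rightarrow> nat \<Rightarrow> nat \<Rightarrow> real" where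
  "theta_state N E \<sigma> th0 \<eta> 0 = th0"
| "theta_state N E \<sigma> th0 \<eta> (Suc t) =
     (\<lambda>i. (1 - \<sigma> i) * theta_state N E \<sigma> th0 \<eta> t i
          + \<sigma> i * ((\<Sum>j\<in>insert i (nbr E i). theta_state N E \<sigma> th0 \<eta> t j + \<eta> j t)
                     / (real (card (nbr E i)) + 1)))"

end

theory Submission
  imports Defs "Jordan_Normal_Form.Jordan_Normal_Form_Uniqueness" "Jordan_Normal_Form.Jordan_Normal_Form_Existence"
begin
no_notation Finite_Cartesian_Product.vec_nth (infixl "$" 90)



lemma ug_nbr:
  assumes "undirected_graph N E"
  shows "nbr E i \<subseteq> {..<N}" "finite (nbr E i)" "i \<notin> nbr E i"
proof -
  show 1: "nbr E i \<subseteq> {..<N}" using assms unfolding undirected_graph_def nbr_def by auto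
  show "finite (nbr E i)" by (rule finite_subset[OF 1]) auto
  show "i \<notin> nbr E i" using assms unfolding undirected_graph_def nbr_def by auto
qed

lemma ug_sym: "undirected_graph N E \<Longrightarrow> (i,j) \<in> E \<Longrightarrow> (j,i) \<in> E"
  unfolding undirected_graph_def by blast

lemma ug_sum_swap:
  assumes ug: "undirected_graph N E"
  shows "(\<Sum>i<N. \<Sum>j\<in>nbr E i. f i j) = (\<Sum>i<N. \<Sum>j\<in>nbr E i. f j i)"
proof -
  have Es: "E \<subseteq> {..<N} \<times> {..<N}" using ug unfolding undirected_graph_def by auto
  have fin: "finite E" by (rule finite_subset[OF Es]) auto
  have sig: "Sigma {..<N} (nbr E) = E" using Es unfolding nbr_def by auto
  have e1: "(\<Sum>i<N. \<Sum>j\<in>nbr E i. g i j) = (\<Sum>p\<in>E. g (fst p) (snd p))" for g :: "nat \<Rightarrow> nat \<Rightarrow> 'a"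
    by (subst sum.Sigma) (auto simp: ug_nbr[OF ug] sig split_beta)
  have "(\<Sum>p\<in>E. f (snd p) (fst p)) = (\<Sum>p\<in>E. f (fst p) (snd p))"
    by (rule sum.reindex_bij_witness[where i=prod.swap and j=prod.swap])
       (auto intro: ug_sym[OF ug])
  then show ?thesis using e1[of f] e1[of "\<lambda>i j. f j i"] by simp
qed

lemma ug_cnbr_sum:
  assumes ug: "undirected_graph N E"
  shows "(\<Sum>i<N. \<Sum>j\<in>insert i (nbr E i). f j) = (\<Sum>i<N. (real (card (nbr E i)) + 1) * f i)"
proof -
  have "(\<Sum>i<N. \<Sum>j\<in>insert i (nbr E i). f j) = (\<Sum>i<N. f i + (\<Sum>j\<in>nbr E i. f j))"
    by (intro sum.cong refl, subst sum.insert) (auto simp: ug_nbr[OF ug])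
  also have "\<dots> = (\<Sum>i<N. f i) + (\<Sum>i<N. \<Sum>j\<in>nbr E i. f j)"
    by (rule sum.distrib)
  also have "(\<Sum>i<N. \<Sum>j\<in>nbr E i. f j) = (\<Sum>i<N. \<Sum>j\<in>nbr E i. f i)"
    by (rule ug_sum_swap[OF ug, of "\<lambda>i j. f j"])
  also have "\<dots> = (\<Sum>i<N. real (card (nbr E i)) * f i)"
    by simp
  also have "(\<Sum>i<N. f i) + (\<Sum>i<N. real (card (nbr E i)) * f i) = (\<Sum>i<N. (real (card (nbr E i)) + 1) * f i)"
    by (simp add: distrib_right sum.distrib)
  finally show ?thesis .
qed

lemma lap_carrier: "laplacian N E \<in> carrier_mat N N"
  unfolding laplacian_def by simp

lemma lap_mult:
  assumes ug: "undirected_graph N E" and i: "i < N" and x: "x \<in> carrier_vec N"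
  shows "(laplacian N E *\<^sub>v x) $ i = real (card (nbr E i)) * x $ i - (\<Sum>j\<in>nbr E i. x $ j)"
proof -
  have nb: "nbr E i \<subseteq> {0..<N}" using ug_nbr(1)[OF ug, of i] by auto
  have "(laplacian N E *\<^sub>v x) $ i = (\<Sum>j\<in>{0..<N}. (if i = j then real (card (nbr E i))
                                      else if (i, j) \<in> E then -1 else 0) * x $ j)"
    using i x unfolding laplacian_def by (simp add: scalar_prod_def)
  also have "\<dots> = (\<Sum>j\<in>{0..<N}. (if j = i then real (card (nbr E i)) * x $ j else 0)
        + (if j \<in> nbr E i then - x $ j else 0))"
    using ug_nbr(3)[OF ug, of i] by (intro sum.cong refl) (auto simp: nbr_def)
  also have "\<dots> = real (card (nbr E i)) * x $ i - (\<Sum>j\<in>nbr E i. x $ j)"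
    using i nb by (simp add: sum.distrib sum.If_cases Int_absorb1 sum_negf)
  finally show ?thesis .
qed

lemma lap_kernel_dim:
  assumes ug: "undirected_graph N E" and S: "S \<subseteq> {..<N}" "i0 \<in> S" "j0 < N" "j0 \<notin> S"
    and closed: "\<And>i j. (i,j) \<in> E \<Longrightarrow> (i \<in> S \<longleftrightarrow> j \<in> S)"
  shows "2 \<le> kernel_dim (laplacian N E)"
proof -
  let ?L = "laplacian N E"
  interpret K: kernel N N ?L by unfold_locales (rule lap_carrier)
  define u where "u = vec N (\<lambda>k. if k \<in> S then 1 else (0::real))"
  define v where "v = vec N (\<lambda>k. if k \<in> S then 0 else (1::real))"
  have kern: "vec N (\<lambda>k. if k \<in> S then a else b) \<in> mat_kernel ?L" for a b :: real
  proof (rule mat_kernelI[OF lap_carrier])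
    show "?L *\<^sub>v vec N (\<lambda>k. if k \<in> S then a else b) = 0\<^sub>v N"
    proof (rule eq_vecI)
      fix i assume i: "i < dim_vec (0\<^sub>v N :: real vec)"
      then have i: "i < N" by simp
      have "(\<Sum>j\<in>nbr E i. vec N (\<lambda>k. if k \<in> S then a else b) $ j)
          = (\<Sum>j\<in>nbr E i. (if i \<in> S then a else b))"
        using ug_nbr(1)[OF ug, of i] closed by (intro sum.cong refl) (auto simp: nbr_def)
      then show "(?L *\<^sub>v vec N (\<lambda>k. if k \<in> S then a else b)) $ i = 0\<^sub>v N $ i"
        using i by (simp add: lap_mult[OF ug i])
    qed (simp add: lap_carrier[THEN carrier_matD(1)])
  qed simp
  have uk: "u \<in> mat_kernel ?L" and vk: "v \<in> mat_kernel ?L" unfolding u_def v_def by (rule kern)+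
  have i0: "i0 < N" using S by auto
  have "u $ i0 = 1" "v $ i0 = 0" unfolding u_def v_def using i0 S(2) by simp_all
  then have uv: "u \<noteq> v" by auto
  have li: "\<not> K.lin_dep {u,v}"
  proof
    assume "K.lin_dep {u,v}"
    then obtain A a x where A: "finite A" "A \<subseteq> {u,v}" and lc: "K.lincomb a A = 0\<^sub>v N"
      and x: "x \<in> A" "a x \<noteq> 0"
      unfolding K.Ker.lin_dep_def by blast
    have Ak: "A \<subseteq> mat_kernel ?L" using A uk vk by auto
    have idx: "(\<Sum>y\<in>A. a y * y $ k) = 0" if "k < N" for k
      using K.lincomb_index[OF that Ak, of a] lc that by simp
    show False
    proof (cases "x = u")
      case True
      have "(\<Sum>y\<in>A. a y * y $ i0) = a u"
      proof -
        have "(\<Sum>y\<in>A. a y * y $ i0) = (\<Sum>y\<in>A. if y = u then a u else 0)"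
          using A i0 S by (intro sum.cong refl) (auto simp: u_def v_def)
        then show ?thesis using A x True by simp
      qed
      then show False using idx[OF i0] x True by simp
    next
      case False
      then have xv: "x = v" using x A by auto
      have "(\<Sum>y\<in>A. a y * y $ j0) = (\<Sum>y\<in>A. if y = v then a v else 0)"
        using A S by (intro sum.cong refl) (auto simp: u_def v_def)
      then have "(\<Sum>y\<in>A. a y * y $ j0) = a v" using A x xv by simp
      then show False using idx[OF S(3)] x xv by simp
    qed
  qed
  obtain B where B: "finite B" "K.basis B" using kernel_basis_exists[OF lap_carrier] by blast
  have fd: "K.Ker.fin_dim" unfolding K.Ker.fin_dim_def using B unfolding K.Ker.basis_def by blast
  have "card {u,v} \<le> K.dim" by (rule K.Ker.li_le_dim(2)[OF fd _ li]) (use uk vk in auto)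
  then show ?thesis using uv by simp
qed





lemma order_prod_lin:
  "Polynomial.order a (\<Prod>x\<leftarrow>xs. [:-x, 1:]) = length (filter (\<lambda>x. x = a) xs)" for a :: real
proof (induction xs)
  case (Cons x xs)
  have nz: "(\<Prod>x\<leftarrow>xs. [:-x, 1:]) \<noteq> (0 :: real poly)"
    by (auto simp: prod_list_zero_iff)
  have "Polynomial.order a (\<Prod>x\<leftarrow>x # xs. [:-x, 1:]) = Polynomial.order a ([:-x, 1:] * (\<Prod>x\<leftarrow>xs. [:-x, 1:]))" by simp
  also have "\<dots> = Polynomial.order a ([:-x, 1:]) + Polynomial.order a (\<Prod>x\<leftarrow>xs. [:-x, 1:])"
    by (rule order_mult) (metis nz mult_eq_0_iff pCons_eq_0_iff zero_neq_one)
  also have "Polynomial.order a ([:-x, 1:]) = (if a = x then 1 else 0)"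
    using order_linear_power[of a "-x" 1] by simp
  finally show ?case using Cons by auto
qed simp

lemma sum_min1_le:
  fixes n_as :: "(nat \<times> 'a) list"
  shows "(\<Sum>n\<leftarrow>map fst [(n, e)\<leftarrow>n_as . e = evl]. min 1 n) \<le> sum_list (map fst (filter (\<lambda>na. snd na = evl) n_as))"
  by (induction n_as) (auto simp: min_def intro: add_mono)

lemma kernel_le_order:
  fixes A :: "real mat"
  assumes A: "A \<in> carrier_mat n n" and cp: "char_poly A = (\<Prod>a\<leftarrow>as. [:-a, 1:])"
  shows "kernel_dim A \<le> Polynomial.order 0 (char_poly A)"
proof -
  obtain n_as where jnf: "jordan_nf A n_as" using jordan_nf_exists[OF A cp] by blast
  have cm: "char_matrix A 0 ^\<^sub>m 1 = A"
    using A by (intro eq_matI) (auto simp: char_matrix_def)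
  have "kernel_dim A = dim_gen_eigenspace A 0 1" unfolding dim_gen_eigenspace_def cm ..
  also have "\<dots> = (\<Sum>n\<leftarrow>map fst [(n, e)\<leftarrow>n_as . e = 0]. min 1 n)" by (rule dim_gen_eigenspace[OF jnf])
  also have "\<dots> \<le> sum_list (map fst (filter (\<lambda>na. snd na = 0) n_as))" by (rule sum_min1_le)
  also have "\<dots> = Polynomial.order 0 (char_poly A)" by (rule jordan_nf_order[OF jnf, symmetric])
  finally show ?thesis .
qed

lemma connected_from_eig:
  assumes ug: "undirected_graph N E" and N2: "2 \<le> N" and eig: "laplacian_eigenvalues N E lams"
    and lam2: "lams ! 1 > 0" and i: "i < N" and j: "j < N"
  shows "(i, j) \<in> E\<^sup>*"
proof (rule ccontr)
  assume nij: "(i, j) \<notin> E\<^sup>*"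
  define S where "S = {k. k < N \<and> (i, k) \<in> E\<^sup>*}"
  have Es: "\<And>a b. (a,b) \<in> E \<Longrightarrow> a < N \<and> b < N" using ug unfolding undirected_graph_def by auto
  have closed: "(a \<in> S \<longleftrightarrow> b \<in> S)" if ab: "(a,b) \<in> E" for a b
  proof -
    have ba: "(b,a) \<in> E" using ug_sym[OF ug ab] .
    show ?thesis using Es[OF ab] ab ba unfolding S_def
      by (auto intro: rtrancl_into_rtrancl)
  qed
  have "2 \<le> kernel_dim (laplacian N E)"
    by (rule lap_kernel_dim[OF ug _ _ j, of S i]) (use i nij closed in \<open>auto simp: S_def\<close>)
  also have "\<dots> \<le> Polynomial.order 0 (char_poly (laplacian N E))"
    using eig unfolding laplacian_eigenvalues_def by (intro kernel_le_order[OF lap_carrier]) auto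
  also have "\<dots> = length (filter (\<lambda>x. x = 0) lams)"
    using eig unfolding laplacian_eigenvalues_def by (simp add: order_prod_lin)
  finally have two: "2 \<le> length (filter (\<lambda>x. x = 0) lams)" .
  have len: "length lams = N" and srt: "sorted lams" using eig unfolding laplacian_eigenvalues_def by auto
  obtain x xs where lx: "lams = x # xs" using len N2 by (cases lams) auto
  have "\<forall>y\<in>set xs. y > 0"
  proof
    fix y assume "y \<in> set xs"
    then obtain k where k: "k < length xs" "xs ! k = y" by (auto simp: in_set_conv_nth)
    have "lams ! 1 \<le> lams ! Suc k" using srt k lx by (intro sorted_nth_mono) auto
    then show "y > 0" using lam2 k lx by simp
  qed
  then have "filter (\<lambda>x. x = 0) xs = []" by (auto simp: filter_empty_conv)
  then show False using two lx by (cases "x = 0") auto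
qed





lemma rec_to_zero:
  fixes a b :: "nat \<Rightarrow> real"
  assumes r: "0 \<le> r" "r < 1" and a0: "\<And>t. 0 \<le> a t"
    and step: "\<And>t. a (Suc t) \<le> r * a t + b t" and b: "b \<longlonglongrightarrow> 0"
  shows "a \<longlonglongrightarrow> 0"
proof (rule LIMSEQ_I)
  fix \<epsilon> :: real assume e: "0 < \<epsilon>"
  define \<delta> where "\<delta> = \<epsilon> * (1 - r) / 2"
  have d: "0 < \<delta>" using e r unfolding \<delta>_def by simp
  obtain T0 where T0: "\<And>t. t \<ge> T0 \<Longrightarrow> norm (b t - 0) < \<delta>" using LIMSEQ_D[OF b d] by blast
  have claim: "a (T0 + n) \<le> r ^ n * a T0 + \<delta> / (1 - r)" for n
  proof (induction n)
    case 0
    then show ?case using d r by simp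
  next
    case (Suc n)
    have "a (T0 + Suc n) \<le> r * a (T0 + n) + b (T0 + n)" using step[of "T0 + n"] by simp
    also have "\<dots> \<le> r * (r ^ n * a T0 + \<delta> / (1 - r)) + \<delta>"
      using Suc r T0[of "T0 + n"] by (intro add_mono mult_left_mono) auto
    also have "\<dots> = r ^ Suc n * a T0 + (r * (\<delta> / (1 - r)) + \<delta>)"
      by (simp add: algebra_simps)
    also have "r * (\<delta> / (1 - r)) + \<delta> = \<delta> / (1 - r)"
    proof -
      have "1 - r \<noteq> 0" using r by simp
      then have "r * (\<delta> / (1 - r)) + \<delta> = (r * \<delta> + \<delta> * (1 - r)) / (1 - r)"
        by (simp add: add_divide_distrib)
      also have "r * \<delta> + \<delta> * (1 - r) = \<delta>" by (simp add: algebra_simps)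
      finally show ?thesis .
    qed
    finally show ?case .
  qed
  have lim: "(\<lambda>n. r ^ n * a T0) \<longlonglongrightarrow> 0"
    by (rule tendsto_mult_left_zero) (rule LIMSEQ_power_zero, use r in auto)
  have e2: "0 < \<epsilon> / 2" using e by simp
  obtain n1 where n1: "\<And>n. n \<ge> n1 \<Longrightarrow> norm (r ^ n * a T0 - 0) < \<epsilon> / 2" using LIMSEQ_D[OF lim e2] by blast
  show "\<exists>no. \<forall>n\<ge>no. norm (a n - 0) < \<epsilon>"
  proof (intro exI allI impI)
    fix t assume t: "T0 + n1 \<le> t"
    define n where "n = t - T0"
    have n: "t = T0 + n" "n \<ge> n1" using t unfolding n_def by auto
    have "a t \<le> r ^ n * a T0 + \<delta> / (1 - r)" using claim n by simp
    also have "\<delta> / (1 - r) = \<epsilon> / 2"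
    proof -
      have "1 - r \<noteq> 0" "2 - 2 * r \<noteq> 0" using r by simp_all
      then show ?thesis unfolding \<delta>_def by (simp add: field_simps)
    qed
    finally have "a t < \<epsilon>" using n1[OF n(2)] by simp
    then show "norm (a t - 0) < \<epsilon>" using a0[of t] by simp
  qed
qed

lemma sq_expand: "(g::real) * (a - s * L)^2 = g * a^2 - 2 * (g * s) * (a * L) + (g * s) * s * L^2"
  by (simp add: power2_eq_square algebra_simps)

definition wt :: "(nat \<times> nat) set \<Rightarrow> nat \<Rightarrow> real" where
  "wt E i = real (card (nbr E i)) + 1"

definition gam :: "(nat \<times> nat) set \<Rightarrow> (nat \<Rightarrow> real) \<Rightarrow> nat \<Rightarrow> real" where
  "gam E \<sigma> i = wt E i / \<sigma> i"

definition Tm :: "(nat \<times> nat) set \<Rightarrow> (nat \<Rightarrow> real) \<Rightarrow> (nat \<Rightarrow> real) \<Rightarrow> nat \<Rightarrow> real" where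
  "Tm E \<sigma> x i = (1 - \<sigma> i) * x i + \<sigma> i * (\<Sum>j\<in>insert i (nbr E i). x j) / wt E i"

definition Gam :: "nat \<Rightarrow> (nat \<times> nat) set \<Rightarrow> (nat \<Rightarrow> real) \<Rightarrow> real" where
  "Gam N E \<sigma> = (\<Sum>i<N. gam E \<sigma> i)"

definition mean :: "nat \<Rightarrow> (nat \<times> nat) set \<Rightarrow> (nat \<Rightarrow> real) \<Rightarrow> (nat \<Rightarrow> real) \<Rightarrow> real" where
  "mean N E \<sigma> x = (\<Sum>i<N. gam E \<sigma> i * x i) / Gam N E \<sigma>"

definition Vf :: "nat \<Rightarrow> (nat \<times> nat) set \<Rightarrow> (nat \<Rightarrow> real) \<Rightarrow> (nat \<Rightarrow> real) \<Rightarrow> real" where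
  "Vf N E \<sigma> x = (\<Sum>i<N. gam E \<sigma> i * (x i - mean N E \<sigma> x)^2)"

definition Ed :: "nat \<Rightarrow> (nat \<times> nat) set \<Rightarrow> (nat \<Rightarrow> real) \<Rightarrow> real" where
  "Ed N E x = (\<Sum>i<N. \<Sum>j\<in>nbr E i. (x i - x j)^2)"

lemma theta_step:
  "theta_state N E \<sigma> th0 e (Suc t) i =
     Tm E \<sigma> (theta_state N E \<sigma> th0 e t) i + \<sigma> i * (\<Sum>j\<in>insert i (nbr E i). e j t) / wt E i"
  by (simp add: Tm_def wt_def sum.distrib add_divide_distrib distrib_left)

lemma wt_pos: "0 < wt E i" unfolding wt_def by simp

lemma card_cnbr: "undirected_graph N E \<Longrightarrow> real (card (insert i (nbr E i))) = wt E i"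
  using ug_nbr[of N E i] unfolding wt_def by simp

context
  fixes N :: nat and E :: "(nat \<times> nat) set" and \<sigma> :: "nat \<Rightarrow> real"
  assumes ug: "undirected_graph N E" and sig: "\<forall>i<N. 0 < \<sigma> i \<and> \<sigma> i < 1" and Npos: "0 < N"
begin

lemma gam_pos: "i < N \<Longrightarrow> 0 < gam E \<sigma> i"
  using sig wt_pos[of E i] unfolding gam_def by auto

lemma Gam_pos: "0 < Gam N E \<sigma>"
  unfolding Gam_def using gam_pos Npos by (intro sum_pos) auto

lemma gam_sig: "i < N \<Longrightarrow> gam E \<sigma> i * \<sigma> i = wt E i"
  using sig unfolding gam_def by auto

lemma Ed_nonneg: "0 \<le> Ed N E x"
  unfolding Ed_def by (intro sum_nonneg) auto

lemma Vf_nonneg: "0 \<le> Vf N E \<sigma> x"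
  unfolding Vf_def by (intro sum_nonneg mult_nonneg_nonneg) (auto simp: less_imp_le gam_pos)

lemma cnbr_wt: "(\<Sum>i<N. \<Sum>j\<in>insert i (nbr E i). f j) = (\<Sum>i<N. wt E i * f i)"
  using ug_cnbr_sum[OF ug] unfolding wt_def .

lemma Tm_wsum: "(\<Sum>i<N. gam E \<sigma> i * Tm E \<sigma> x i) = (\<Sum>i<N. gam E \<sigma> i * x i)"
proof -
  have "(\<Sum>i<N. gam E \<sigma> i * Tm E \<sigma> x i)
      = (\<Sum>i<N. gam E \<sigma> i * x i - wt E i * x i + (\<Sum>j\<in>insert i (nbr E i). x j))"
  proof (intro sum.cong refl)
    fix i assume "i \<in> {..<N}"
    then have i: "i < N" by simp
    have g: "gam E \<sigma> i * \<sigma> i = wt E i" by (rule gam_sig[OF i])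
    have w: "wt E i \<noteq> 0" using wt_pos[of E i] by simp
    have e1: "gam E \<sigma> i * Tm E \<sigma> x i = gam E \<sigma> i * x i - (gam E \<sigma> i * \<sigma> i) * x i
        + ((gam E \<sigma> i * \<sigma> i) / wt E i) * (\<Sum>j\<in>insert i (nbr E i). x j)"
      using w unfolding Tm_def by (simp add: field_simps)
    show "gam E \<sigma> i * Tm E \<sigma> x i = gam E \<sigma> i * x i - wt E i * x i + (\<Sum>j\<in>insert i (nbr E i). x j)"
      unfolding e1 g using w by simp
  qed
  also have "\<dots> = (\<Sum>i<N. gam E \<sigma> i * x i)"
    by (simp add: sum.distrib sum_subtractf cnbr_wt)
  finally show ?thesis .
qed

lemma noise_wsum: "(\<Sum>i<N. gam E \<sigma> i * (\<sigma> i * (\<Sum>j\<in>insert i (nbr E i). e j) / wt E i)) = (\<Sum>i<N. wt E i * e i)"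
proof -
  have "(\<Sum>i<N. gam E \<sigma> i * (\<sigma> i * (\<Sum>j\<in>insert i (nbr E i). e j) / wt E i))
      = (\<Sum>i<N. \<Sum>j\<in>insert i (nbr E i). e j)"
  proof (intro sum.cong refl)
    fix i assume "i \<in> {..<N}"
    then have i: "i < N" by simp
    have g: "gam E \<sigma> i * \<sigma> i = wt E i" by (rule gam_sig[OF i])
    have w: "wt E i \<noteq> 0" using wt_pos[of E i] by simp
    show "gam E \<sigma> i * (\<sigma> i * (\<Sum>j\<in>insert i (nbr E i). e j) / wt E i) = (\<Sum>j\<in>insert i (nbr E i). e j)"
      using g w by (simp add: field_simps)
  qed
  then show ?thesis using cnbr_wt by simp
qed

lemma mean_Tm: "mean N E \<sigma> (Tm E \<sigma> x) = mean N E \<sigma> x"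
  unfolding mean_def Tm_wsum ..

lemma Tm_shift: "i < N \<Longrightarrow> Tm E \<sigma> (\<lambda>j. x j - c) i = Tm E \<sigma> x i - c"
proof -
  assume i: "i < N"
  have w: "wt E i \<noteq> 0" using wt_pos[of E i] by simp
  have se: "(\<Sum>j\<in>insert i (nbr E i). x j - c) = (\<Sum>j\<in>insert i (nbr E i). x j) - wt E i * c"
    by (simp add: sum_subtractf card_cnbr[OF ug])
  show ?thesis unfolding Tm_def se using w by (simp add: field_simps)
qed

lemma Ed_shift: "Ed N E (\<lambda>j. x j - c) = Ed N E x"
  unfolding Ed_def by simp

lemma Tm_lap: "i < N \<Longrightarrow> Tm E \<sigma> y i = y i - (\<sigma> i / wt E i) * (\<Sum>j\<in>nbr E i. y i - y j)"
proof -
  assume i: "i < N"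
  have w: "wt E i \<noteq> 0" using wt_pos[of E i] by simp
  have s1: "(\<Sum>j\<in>insert i (nbr E i). y j) = y i + (\<Sum>j\<in>nbr E i. y j)"
    using ug_nbr[OF ug, of i] by simp
  have s2: "(\<Sum>j\<in>nbr E i. y i - y j) = real (card (nbr E i)) * y i - (\<Sum>j\<in>nbr E i. y j)"
    by (simp add: sum_subtractf)
  show ?thesis unfolding Tm_def s1 s2 using w unfolding wt_def by (simp add: field_simps)
qed

lemma decrease:
  assumes beta: "0 \<le> \<beta>" "\<forall>i<N. \<sigma> i \<le> 1 - \<beta>"
  shows "(\<Sum>i<N. gam E \<sigma> i * (Tm E \<sigma> y i)^2) \<le> (\<Sum>i<N. gam E \<sigma> i * (y i)^2) - \<beta> * Ed N E y"
proof -
  define Ly where "Ly i = (\<Sum>j\<in>nbr E i. y i - y j)" for i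
  define D where "D i = (\<Sum>j\<in>nbr E i. (y i - y j)^2)" for i
  have half: "(\<Sum>i<N. y i * Ly i) = Ed N E y / 2"
  proof -
    have a: "(\<Sum>i<N. y i * Ly i) = (\<Sum>i<N. \<Sum>j\<in>nbr E i. y i * (y i - y j))"
      unfolding Ly_def by (simp add: sum_distrib_left)
    have b: "(\<Sum>i<N. \<Sum>j\<in>nbr E i. y i * (y i - y j)) = (\<Sum>i<N. \<Sum>j\<in>nbr E i. y j * (y j - y i))"
      by (rule ug_sum_swap[OF ug])
    have c: "(\<Sum>i<N. \<Sum>j\<in>nbr E i. y i * (y i - y j)) + (\<Sum>i<N. \<Sum>j\<in>nbr E i. y j * (y j - y i)) = Ed N E y"
      unfolding Ed_def sum.distrib[symmetric] by (intro sum.cong refl) (simp add: power2_eq_square algebra_simps)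
    show ?thesis using a b c by simp
  qed
  have pt: "gam E \<sigma> i * (Tm E \<sigma> y i)^2 \<le> gam E \<sigma> i * (y i)^2 - 2 * (y i * Ly i) + (1 - \<beta>) * D i"
    if i: "i < N" for i
  proof -
    have g: "gam E \<sigma> i * \<sigma> i = wt E i" by (rule gam_sig[OF i])
    have w: "0 < wt E i" by (rule wt_pos)
    have s: "0 < \<sigma> i" "\<sigma> i \<le> 1 - \<beta>" using sig beta i by auto
    have eq: "gam E \<sigma> i * (Tm E \<sigma> y i)^2 = gam E \<sigma> i * (y i)^2 - 2 * (y i * Ly i) + (\<sigma> i / wt E i) * (Ly i)^2"
    proof -
      have "gam E \<sigma> i * (Tm E \<sigma> y i)^2 = gam E \<sigma> i * (y i - (\<sigma> i / wt E i) * Ly i)^2"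
        using Tm_lap[OF i] unfolding Ly_def by simp
      also have "\<dots> = gam E \<sigma> i * (y i)^2 - 2 * (gam E \<sigma> i * (\<sigma> i / wt E i)) * (y i * Ly i)
            + (gam E \<sigma> i * (\<sigma> i / wt E i)) * (\<sigma> i / wt E i) * (Ly i)^2"
        by (rule sq_expand)
      also have "gam E \<sigma> i * (\<sigma> i / wt E i) = 1"
        using g w by simp
      also have "gam E \<sigma> i * (y i)^2 - 2 * 1 * (y i * Ly i) + 1 * (\<sigma> i / wt E i) * (Ly i)^2
          = gam E \<sigma> i * (y i)^2 - 2 * (y i * Ly i) + (\<sigma> i / wt E i) * (Ly i)^2"
        by simp
      finally show ?thesis .
    qed
    have cs: "(Ly i)^2 \<le> D i * real (card (nbr E i))"
      unfolding Ly_def D_def by (rule sum_squared_le_sum_of_squares)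
    have D0: "0 \<le> D i" unfolding D_def by (intro sum_nonneg) auto
    have "(\<sigma> i / wt E i) * (Ly i)^2 \<le> (\<sigma> i / wt E i) * (D i * real (card (nbr E i)))"
      using cs s w by (intro mult_left_mono) auto
    also have "\<dots> = \<sigma> i * D i * (real (card (nbr E i)) / wt E i)" by simp
    also have "\<dots> \<le> \<sigma> i * D i * 1"
      using s D0 w unfolding wt_def by (intro mult_left_mono) auto
    also have "\<dots> \<le> (1 - \<beta>) * D i" using s D0 by (simp add: mult_right_mono)
    finally show ?thesis using eq by simp
  qed
  have "(\<Sum>i<N. gam E \<sigma> i * (Tm E \<sigma> y i)^2) \<le> (\<Sum>i<N. gam E \<sigma> i * (y i)^2 - 2 * (y i * Ly i) + (1 - \<beta>) * D i)"
    using pt by (intro sum_mono) auto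
  also have "\<dots> = (\<Sum>i<N. gam E \<sigma> i * (y i)^2) - 2 * (\<Sum>i<N. y i * Ly i) + (1 - \<beta>) * Ed N E y"
    unfolding Ed_def D_def by (simp add: sum.distrib sum_subtractf sum_distrib_left)
  also have "\<dots> = (\<Sum>i<N. gam E \<sigma> i * (y i)^2) - \<beta> * Ed N E y"
    unfolding half by (simp add: algebra_simps)
  finally show ?thesis .
qed

end





lemma sq_split:
  fixes a b \<epsilon> :: real
  assumes e: "0 < \<epsilon>"
  shows "(a + b)^2 \<le> (1 + \<epsilon>) * a^2 + (1 + 1/\<epsilon>) * b^2"
proof -
  have "(1 + \<epsilon>) * a^2 + (1 + 1/\<epsilon>) * b^2 - (a + b)^2 = (\<epsilon> * a - b)^2 / \<epsilon>"
    using e by (simp add: field_simps power2_eq_square)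
  also have "\<dots> \<ge> 0" using e by simp
  finally show ?thesis by simp
qed

context
  fixes N :: nat and E :: "(nat \<times> nat) set" and \<sigma> :: "nat \<Rightarrow> real"
  assumes ug: "undirected_graph N E" and sig: "\<forall>i<N. 0 < \<sigma> i \<and> \<sigma> i < 1" and Npos: "0 < N"
begin

lemma edge_le_Ed:
  assumes ab: "(a, b) \<in> E"
  shows "(x a - x b)^2 \<le> Ed N E x"
proof -
  have a: "a < N" and b: "b \<in> nbr E a" using ab ug unfolding undirected_graph_def nbr_def by auto
  have "(x a - x b)^2 \<le> (\<Sum>j\<in>nbr E a. (x a - x j)^2)"
    by (rule member_le_sum[OF b]) (auto simp: ug_nbr[OF ug])
  also have "\<dots> \<le> (\<Sum>i<N. \<Sum>j\<in>nbr E i. (x i - x j)^2)"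
    by (rule member_le_sum[where f = "\<lambda>i. \<Sum>j\<in>nbr E i. (x i - x j)^2"]) (use a in \<open>auto intro: sum_nonneg\<close>)
  finally show ?thesis unfolding Ed_def .
qed

lemma path_bound:
  assumes "(i, j) \<in> E\<^sup>*"
  shows "\<exists>K\<ge>0. \<forall>x::nat\<Rightarrow>real. (x i - x j)^2 \<le> K * Ed N E x"
  using assms
proof (induction rule: rtrancl_induct)
  case base
  then show ?case by (intro exI[of _ 0]) simp
next
  case (step j k)
  then obtain K where K: "K \<ge> 0" "\<And>x::nat\<Rightarrow>real. (x i - x j)^2 \<le> K * Ed N E x" by blast
  show ?case
  proof (intro exI[of _ "2 * K + 2"] conjI allI)
    show "0 \<le> 2 * K + 2" using K by simp
    fix x :: "nat \<Rightarrow> real"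
    have "(x i - x k)^2 \<le> 2 * (x i - x j)^2 + 2 * (x j - x k)^2"
    proof -
      have "2 * (x i - x j)^2 + 2 * (x j - x k)^2 - (x i - x k)^2 = (x i - 2 * x j + x k)^2"
        by (simp add: power2_eq_square algebra_simps)
      then show ?thesis by (metis diff_ge_0_iff_ge zero_le_power2)
    qed
    also have "\<dots> \<le> 2 * (K * Ed N E x) + 2 * Ed N E x"
      using K(2)[of x] edge_le_Ed[OF step(2), of x] by simp
    also have "\<dots> = (2 * K + 2) * Ed N E x" by (simp add: algebra_simps)
    finally show "(x i - x k)^2 \<le> (2 * K + 2) * Ed N E x" .
  qed
qed

lemma poincare:
  assumes conn: "\<forall>i<N. \<forall>j<N. (i, j) \<in> E\<^sup>*"
  shows "\<exists>K>0. \<forall>x i j. i < N \<longrightarrow> j < N \<longrightarrow> (x i - x j)^2 \<le> K * Ed N E x"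
proof -
  have "\<forall>p\<in>{..<N} \<times> {..<N}. \<exists>K\<ge>0. \<forall>x. (x (fst p) - x (snd p))^2 \<le> K * Ed N E x"
    using conn path_bound by auto
  then obtain Kf where Kf: "\<And>p. p \<in> {..<N} \<times> {..<N} \<Longrightarrow> Kf p \<ge> 0 \<and> (\<forall>x. (x (fst p) - x (snd p))^2 \<le> Kf p * Ed N E x)"
    by metis
  define K where "K = 1 + (\<Sum>p\<in>{..<N} \<times> {..<N}. Kf p)"
  have Kpos: "K > 0" unfolding K_def using Kf by (smt (verit) sum_nonneg)
  show ?thesis
  proof (intro exI[of _ K] conjI allI impI Kpos)
    fix x i j assume ij: "i < N" "j < N"
    have p: "(i, j) \<in> {..<N} \<times> {..<N}" using ij by auto
    have "Kf (i, j) \<le> (\<Sum>p\<in>{..<N} \<times> {..<N}. Kf p)"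
      by (rule member_le_sum[OF p]) (use Kf in auto)
    then have "Kf (i, j) \<le> K" unfolding K_def by simp
    then have "Kf (i, j) * Ed N E x \<le> K * Ed N E x" by (intro mult_right_mono Ed_nonneg[OF ug sig Npos])
    moreover have "(x i - x j)^2 \<le> Kf (i, j) * Ed N E x" using Kf[OF p] by auto
    ultimately show "(x i - x j)^2 \<le> K * Ed N E x" by linarith
  qed
qed

lemma mean_diff: "i < N \<Longrightarrow> x i - mean N E \<sigma> x = (\<Sum>j<N. gam E \<sigma> j * (x i - x j)) / Gam N E \<sigma>"
proof -
  assume i: "i < N"
  have G: "Gam N E \<sigma> \<noteq> 0" using Gam_pos[OF ug sig Npos] by simp
  have g: "(\<Sum>j<N. gam E \<sigma> j * x i) = Gam N E \<sigma> * x i" unfolding Gam_def by (simp add: sum_distrib_right)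
  have "(\<Sum>j<N. gam E \<sigma> j * (x i - x j)) = (\<Sum>j<N. gam E \<sigma> j * x i - gam E \<sigma> j * x j)"
    by (simp add: right_diff_distrib)
  also have "\<dots> = Gam N E \<sigma> * x i - (\<Sum>j<N. gam E \<sigma> j * x j)"
    unfolding sum_subtractf g ..
  finally have "(\<Sum>j<N. gam E \<sigma> j * (x i - x j)) = Gam N E \<sigma> * x i - (\<Sum>j<N. gam E \<sigma> j * x j)" .
  then show ?thesis unfolding mean_def using G by (simp add: field_simps)
qed

lemma V_le_Ed:
  assumes K: "K > 0" "\<forall>x i j. i < N \<longrightarrow> j < N \<longrightarrow> (x i - x j)^2 \<le> K * Ed N E x"
  shows "Vf N E \<sigma> x \<le> Gam N E \<sigma> * K * Ed N E x"
proof -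
  define s where "s = sqrt (K * Ed N E x)"
  have E0: "0 \<le> Ed N E x" by (rule Ed_nonneg[OF ug sig Npos])
  have KE: "0 \<le> K * Ed N E x" using mult_nonneg_nonneg[OF less_imp_le[OF K(1)] E0] .
  have s0: "0 \<le> s" unfolding s_def using KE by simp
  have G: "0 < Gam N E \<sigma>" using Gam_pos[OF ug sig Npos] .
  have pt: "(x i - mean N E \<sigma> x)^2 \<le> K * Ed N E x" if i: "i < N" for i
  proof -
    have dj: "\<bar>x i - x j\<bar> \<le> s" if j: "j < N" for j
    proof -
      have "sqrt ((x i - x j)^2) \<le> s" unfolding s_def using K(2) i j by (intro real_sqrt_le_mono) auto
      then show ?thesis by simp
    qed
    have "\<bar>\<Sum>j<N. gam E \<sigma> j * (x i - x j)\<bar> \<le> (\<Sum>j<N. \<bar>gam E \<sigma> j * (x i - x j)\<bar>)"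
      by (rule sum_abs)
    also have "\<dots> \<le> (\<Sum>j<N. gam E \<sigma> j * s)"
    proof (intro sum_mono)
      fix j assume "j \<in> {..<N}"
      then have j: "j < N" by simp
      have g: "0 < gam E \<sigma> j" using gam_pos[OF ug sig Npos j] .
      show "\<bar>gam E \<sigma> j * (x i - x j)\<bar> \<le> gam E \<sigma> j * s"
        using dj[OF j] g by (simp add: abs_mult)
    qed
    also have "\<dots> = Gam N E \<sigma> * s" unfolding Gam_def by (simp add: sum_distrib_right)
    finally have h: "\<bar>\<Sum>j<N. gam E \<sigma> j * (x i - x j)\<bar> \<le> Gam N E \<sigma> * s" .
    have "\<bar>x i - mean N E \<sigma> x\<bar> = \<bar>\<Sum>j<N. gam E \<sigma> j * (x i - x j)\<bar> / Gam N E \<sigma>"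
      using mean_diff[OF i] G by simp
    also have "\<dots> \<le> s" using h G by (simp add: divide_le_eq mult.commute)
    finally have "\<bar>x i - mean N E \<sigma> x\<bar> \<le> s" .
    then have "\<bar>x i - mean N E \<sigma> x\<bar>^2 \<le> s^2" using s0 by (intro power_mono) auto
    then show ?thesis unfolding s_def using KE by simp
  qed
  have "Vf N E \<sigma> x \<le> (\<Sum>i<N. gam E \<sigma> i * (K * Ed N E x))"
    unfolding Vf_def using gam_pos[OF ug sig Npos] pt
    by (intro sum_mono mult_left_mono) (auto intro: less_imp_le)
  also have "\<dots> = Gam N E \<sigma> * K * Ed N E x" unfolding Gam_def by (simp add: sum_distrib_right mult.assoc)
  finally show ?thesis .
qed

lemma contraction:
  assumes beta: "0 < \<beta>" "\<forall>i<N. \<sigma> i \<le> 1 - \<beta>"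
    and K: "K > 0" "\<forall>x i j. i < N \<longrightarrow> j < N \<longrightarrow> (x i - x j)^2 \<le> K * Ed N E x"
  shows "Vf N E \<sigma> (Tm E \<sigma> x) \<le> (Gam N E \<sigma> * K / (Gam N E \<sigma> * K + \<beta>)) * Vf N E \<sigma> x"
proof -
  define m where "m = mean N E \<sigma> x"
  define y where "y j = x j - m" for j
  have G: "0 < Gam N E \<sigma>" using Gam_pos[OF ug sig Npos] .
  have "Vf N E \<sigma> (Tm E \<sigma> x) = (\<Sum>i<N. gam E \<sigma> i * (Tm E \<sigma> y i)^2)"
    unfolding Vf_def mean_Tm[OF ug sig Npos] m_def[symmetric] y_def
    by (intro sum.cong refl) (simp add: Tm_shift[OF ug sig Npos])
  also have "\<dots> \<le> (\<Sum>i<N. gam E \<sigma> i * (y i)^2) - \<beta> * Ed N E y"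
    by (rule decrease[OF ug sig Npos]) (use beta in auto)
  also have "\<dots> = Vf N E \<sigma> x - \<beta> * Ed N E x"
    unfolding Vf_def y_def m_def Ed_shift[OF ug sig Npos] ..
  finally have a: "Vf N E \<sigma> (Tm E \<sigma> x) \<le> Vf N E \<sigma> x - \<beta> * Ed N E x" .
  define GK where "GK = Gam N E \<sigma> * K"
  have GK: "0 < GK" unfolding GK_def using G K by simp
  have VE: "Vf N E \<sigma> x \<le> GK * Ed N E x" unfolding GK_def by (rule V_le_Ed[OF K])
  have Ed0: "0 \<le> Ed N E x" by (rule Ed_nonneg[OF ug sig Npos])
  have h1: "Vf N E \<sigma> x \<le> (GK + \<beta>) * Ed N E x" using VE Ed0 beta(1)
    by (simp add: distrib_right) (smt (verit) mult_nonneg_nonneg)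
  have "(GK + \<beta>) * (Vf N E \<sigma> x - \<beta> * Ed N E x) \<le> GK * Vf N E \<sigma> x"
  proof -
    have "\<beta> * Vf N E \<sigma> x \<le> \<beta> * ((GK + \<beta>) * Ed N E x)" using h1 beta(1) by (intro mult_left_mono) auto
    then show ?thesis by (simp add: algebra_simps)
  qed
  then have "Vf N E \<sigma> x - \<beta> * Ed N E x \<le> GK * Vf N E \<sigma> x / (GK + \<beta>)"
    using GK beta(1) by (simp add: pos_le_divide_eq mult.commute)
  then show ?thesis using a unfolding GK_def by simp
qed

lemma mean_add: "mean N E \<sigma> (\<lambda>i. z i + u i) = mean N E \<sigma> z + mean N E \<sigma> u"
  unfolding mean_def by (simp add: distrib_left sum.distrib add_divide_distrib)

lemma Vf_le_sq: "Vf N E \<sigma> u \<le> (\<Sum>i<N. gam E \<sigma> i * (u i)^2)"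
proof -
  define m where "m = mean N E \<sigma> u"
  have G: "0 < Gam N E \<sigma>" using Gam_pos[OF ug sig Npos] .
  have su: "(\<Sum>i<N. gam E \<sigma> i * u i) = m * Gam N E \<sigma>" unfolding m_def mean_def using G by simp
  have "Vf N E \<sigma> u = (\<Sum>i<N. gam E \<sigma> i * (u i)^2 - 2 * m * (gam E \<sigma> i * u i) + m^2 * gam E \<sigma> i)"
    unfolding Vf_def m_def[symmetric] by (intro sum.cong refl) (simp add: power2_eq_square algebra_simps)
  also have "\<dots> = (\<Sum>i<N. gam E \<sigma> i * (u i)^2) - 2 * m * (\<Sum>i<N. gam E \<sigma> i * u i) + m^2 * Gam N E \<sigma>"
    unfolding Gam_def by (simp add: sum.distrib sum_subtractf sum_distrib_left)
  also have "\<dots> = (\<Sum>i<N. gam E \<sigma> i * (u i)^2) - m^2 * Gam N E \<sigma>"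
    unfolding su by (simp add: power2_eq_square)
  also have "\<dots> \<le> (\<Sum>i<N. gam E \<sigma> i * (u i)^2)" using G by simp
  finally show ?thesis .
qed

lemma noise_step:
  assumes e: "0 < \<epsilon>"
  shows "Vf N E \<sigma> (\<lambda>i. z i + u i) \<le> (1 + \<epsilon>) * Vf N E \<sigma> z + (1 + 1/\<epsilon>) * (\<Sum>i<N. gam E \<sigma> i * (u i)^2)"
proof -
  have "Vf N E \<sigma> (\<lambda>i. z i + u i) = (\<Sum>i<N. gam E \<sigma> i * ((z i - mean N E \<sigma> z) + (u i - mean N E \<sigma> u))^2)"
    unfolding Vf_def mean_add by (intro sum.cong refl) (simp add: algebra_simps)
  also have "\<dots> \<le> (\<Sum>i<N. gam E \<sigma> i * ((1 + \<epsilon>) * (z i - mean N E \<sigma> z)^2 + (1 + 1/\<epsilon>) * (u i - mean N E \<sigma> u)^2))"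
    using gam_pos[OF ug sig Npos] sq_split[OF e]
    by (intro sum_mono mult_left_mono) (auto intro: less_imp_le)
  also have "\<dots> = (1 + \<epsilon>) * Vf N E \<sigma> z + (1 + 1/\<epsilon>) * Vf N E \<sigma> u"
    unfolding Vf_def by (simp add: sum.distrib sum_distrib_left algebra_simps)
  also have "\<dots> \<le> (1 + \<epsilon>) * Vf N E \<sigma> z + (1 + 1/\<epsilon>) * (\<Sum>i<N. gam E \<sigma> i * (u i)^2)"
    using Vf_le_sq[of u] e by (intro add_left_mono mult_left_mono) auto
  finally show ?thesis .
qed

end





lemma consensus:
  fixes N :: nat and E :: "(nat \<times> nat) set" and \<sigma> :: "nat \<Rightarrow> real"
    and e :: "nat \<Rightarrow> nat \<Rightarrow> real" and th0 :: "nat \<Rightarrow> real"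
  assumes ug: "undirected_graph N E" and sig: "\<forall>i<N. 0 < \<sigma> i \<and> \<sigma> i < 1" and Npos: "0 < N"
    and conn: "\<forall>i<N. \<forall>j<N. (i, j) \<in> E\<^sup>*"
    and summ: "\<forall>j<N. summable (\<lambda>t. \<bar>e j t\<bar>)"
  shows "summable (\<lambda>t. \<Sum>j<N. wt E j * e j t)"
    and "\<forall>i<N. (\<lambda>t. theta_state N E \<sigma> th0 e t i) \<longlonglongrightarrow>
          ((\<Sum>i<N. gam E \<sigma> i * th0 i) + (\<Sum>t. \<Sum>j<N. wt E j * e j t)) / Gam N E \<sigma>"
proof -
  define \<xi> where "\<xi> t = (\<Sum>j<N. wt E j * e j t)" for t
  have sumxi: "summable \<xi>"
  proof (rule summable_comparison_test)
    show "\<exists>No. \<forall>n\<ge>No. norm (\<xi> n) \<le> (\<Sum>j<N. wt E j * \<bar>e j n\<bar>)"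
    proof (intro exI allI impI)
      fix n
      have "norm (\<xi> n) \<le> (\<Sum>j<N. \<bar>wt E j * e j n\<bar>)" unfolding \<xi>_def real_norm_def by (rule sum_abs)
      also have "\<dots> = (\<Sum>j<N. wt E j * \<bar>e j n\<bar>)"
        using wt_pos by (simp add: abs_mult less_imp_le)
      finally show "norm (\<xi> n) \<le> (\<Sum>j<N. wt E j * \<bar>e j n\<bar>)" .
    qed
    show "summable (\<lambda>n. \<Sum>j<N. wt E j * \<bar>e j n\<bar>)"
      using summ by (intro summable_sum summable_mult) auto
  qed
  then show "summable (\<lambda>t. \<Sum>j<N. wt E j * e j t)" unfolding \<xi>_def .
  define \<theta> where "\<theta> t = theta_state N E \<sigma> th0 e t" for t
  define u where "u t i = \<sigma> i * (\<Sum>j\<in>insert i (nbr E i). e j t) / wt E i" for t i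
  have step: "\<theta> (Suc t) = (\<lambda>i. Tm E \<sigma> (\<theta> t) i + u t i)" for t
    unfolding \<theta>_def u_def by (rule ext) (rule theta_step)
  define S where "S t = (\<Sum>i<N. gam E \<sigma> i * \<theta> t i)" for t
  define S0 where "S0 = (\<Sum>i<N. gam E \<sigma> i * th0 i)"
  have Sstep: "S (Suc t) = S t + \<xi> t" for t
  proof -
    have "S (Suc t) = (\<Sum>i<N. gam E \<sigma> i * Tm E \<sigma> (\<theta> t) i) + (\<Sum>i<N. gam E \<sigma> i * u t i)"
      unfolding S_def step by (simp add: distrib_left sum.distrib)
    also have "\<dots> = S t + \<xi> t"
      unfolding S_def \<xi>_def Tm_wsum[OF ug sig Npos] u_def noise_wsum[OF ug sig Npos] ..
    finally show ?thesis .
  qed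
  have Sform: "S t = S0 + (\<Sum>s<t. \<xi> s)" for t
  proof (induction t)
    case 0
    then show ?case unfolding S_def S0_def \<theta>_def by simp
  next
    case (Suc t)
    then show ?case using Sstep by simp
  qed
  have Slim: "S \<longlonglongrightarrow> S0 + suminf \<xi>"
    unfolding Sform by (intro tendsto_add tendsto_const summable_LIMSEQ sumxi)
  have G: "0 < Gam N E \<sigma>" by (rule Gam_pos[OF ug sig Npos])
  have mlim: "(\<lambda>t. mean N E \<sigma> (\<theta> t)) \<longlonglongrightarrow> (S0 + suminf \<xi>) / Gam N E \<sigma>"
    unfolding mean_def S_def[symmetric] by (intro tendsto_divide Slim tendsto_const) (use G in auto)
  define \<beta> where "\<beta> = 1 - Max (\<sigma> ` {..<N})"
  have fin: "finite (\<sigma> ` {..<N})" "\<sigma> ` {..<N} \<noteq> {}" using Npos by auto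
  have Mx: "Max (\<sigma> ` {..<N}) < 1" using fin sig by (subst Max_less_iff) auto
  have b0: "0 < \<beta>" unfolding \<beta>_def using Mx by simp
  have bs: "\<forall>i<N. \<sigma> i \<le> 1 - \<beta>" unfolding \<beta>_def using fin by (auto intro: Max_ge)
  obtain K where K: "K > 0" "\<forall>x i j. i < N \<longrightarrow> j < N \<longrightarrow> (x i - x j)^2 \<le> K * Ed N E x"
    using poincare[OF ug sig Npos conn] by blast
  define \<rho> where "\<rho> = Gam N E \<sigma> * K / (Gam N E \<sigma> * K + \<beta>)"
  have GK: "0 < Gam N E \<sigma> * K" using G K by simp
  have r0: "0 \<le> \<rho>" unfolding \<rho>_def using GK b0 by simp
  have r1: "\<rho> < 1" unfolding \<rho>_def using GK b0 by simp
  define \<epsilon> where "\<epsilon> = (1 - \<rho>) / 2"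
  have e0: "0 < \<epsilon>" unfolding \<epsilon>_def using r1 by simp
  define r where "r = (1 + \<epsilon>) * \<rho>"
  have rr0: "0 \<le> r" unfolding r_def using e0 r0 by simp
  have rr1: "r < 1"
  proof -
    have "r = \<rho> + \<epsilon> * \<rho>" unfolding r_def by (simp add: algebra_simps)
    also have "\<epsilon> * \<rho> \<le> \<epsilon>" using e0 r1 by (simp add: mult_left_le)
    then have "\<rho> + \<epsilon> * \<rho> \<le> \<rho> + \<epsilon>" by simp
    also have "\<rho> + \<epsilon> < 1" unfolding \<epsilon>_def using r1 by (simp add: field_simps)
    finally show ?thesis by (smt (verit) \<open>\<epsilon> * \<rho> \<le> \<epsilon>\<close> \<open>r = \<rho> + \<epsilon> * \<rho>\<close>)
  qed
  define C where "C = 1 + 1 / \<epsilon>"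
  define a where "a t = Vf N E \<sigma> (\<theta> t)" for t
  define b where "b t = C * (\<Sum>i<N. gam E \<sigma> i * (u t i)^2)" for t
  have astep: "a (Suc t) \<le> r * a t + b t" for t
  proof -
    have "a (Suc t) \<le> (1 + \<epsilon>) * Vf N E \<sigma> (Tm E \<sigma> (\<theta> t)) + C * (\<Sum>i<N. gam E \<sigma> i * (u t i)^2)"
      unfolding a_def step C_def by (rule noise_step[OF ug sig Npos e0])
    also have "(1 + \<epsilon>) * Vf N E \<sigma> (Tm E \<sigma> (\<theta> t)) \<le> (1 + \<epsilon>) * (\<rho> * a t)"
      unfolding a_def \<rho>_def using e0 by (intro mult_left_mono contraction[OF ug sig Npos b0 bs K]) auto
    finally show ?thesis unfolding b_def r_def by (simp add: mult.assoc)
  qed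
  have ez: "(\<lambda>t. e j t) \<longlonglongrightarrow> 0" if "j < N" for j
    using summable_LIMSEQ_zero[OF summ[rule_format, OF that]] by (simp add: tendsto_rabs_zero_iff)
  have uz: "(\<lambda>t. u t i) \<longlonglongrightarrow> 0" if i: "i < N" for i
  proof -
    have "(\<lambda>t. \<sigma> i * (\<Sum>j\<in>insert i (nbr E i). e j t) / wt E i) \<longlonglongrightarrow> \<sigma> i * (\<Sum>j\<in>insert i (nbr E i). 0) / wt E i"
    proof (intro tendsto_intros)
      fix j assume "j \<in> insert i (nbr E i)"
      then have "j < N" using i ug_nbr(1)[OF ug, of i] by auto
      then show "(\<lambda>t. e j t) \<longlonglongrightarrow> 0" by (rule ez)
    qed (use wt_pos in \<open>simp add: less_imp_neq[symmetric]\<close>)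
    then show ?thesis unfolding u_def by simp
  qed
  have bz: "b \<longlonglongrightarrow> 0"
  proof -
    have "b \<longlonglongrightarrow> C * (\<Sum>i<N. gam E \<sigma> i * 0^2)"
      unfolding b_def by (intro tendsto_intros uz) auto
    then show ?thesis by simp
  qed
  have a0: "0 \<le> a t" for t unfolding a_def by (rule Vf_nonneg[OF ug sig Npos])
  have az: "a \<longlonglongrightarrow> 0" by (rule rec_to_zero[OF rr0 rr1 a0 astep bz])
  show "\<forall>i<N. (\<lambda>t. theta_state N E \<sigma> th0 e t i) \<longlonglongrightarrow>
          ((\<Sum>i<N. gam E \<sigma> i * th0 i) + (\<Sum>t. \<Sum>j<N. wt E j * e j t)) / Gam N E \<sigma>"
  proof (intro allI impI)
    fix i assume i: "i < N"
    have g: "0 < gam E \<sigma> i" by (rule gam_pos[OF ug sig Npos i])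
    define d where "d t = (\<theta> t i - mean N E \<sigma> (\<theta> t))^2" for t
    have dle: "d t \<le> a t / gam E \<sigma> i" for t
    proof -
      have "gam E \<sigma> i * d t \<le> a t"
        unfolding a_def Vf_def d_def
        by (rule member_le_sum[where f = "\<lambda>i. gam E \<sigma> i * (\<theta> t i - mean N E \<sigma> (\<theta> t))^2"])
           (use i in \<open>auto intro!: mult_nonneg_nonneg simp: less_imp_le gam_pos[OF ug sig Npos]\<close>)
      then show ?thesis using g by (simp add: pos_le_divide_eq mult.commute)
    qed
    have dz: "d \<longlonglongrightarrow> 0"
    proof (rule tendsto_sandwich[where f = "\<lambda>_. 0" and h = "\<lambda>t. a t / gam E \<sigma> i"])
      show "\<forall>\<^sub>F n in sequentially. 0 \<le> d n" unfolding d_def by simp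
      show "\<forall>\<^sub>F n in sequentially. d n \<le> a n / gam E \<sigma> i" using dle by simp
      show "(\<lambda>t. a t / gam E \<sigma> i) \<longlonglongrightarrow> 0" using tendsto_divide[OF az tendsto_const, of "gam E \<sigma> i"] g by simp
    qed simp
    have "(\<lambda>t. sqrt (d t)) \<longlonglongrightarrow> sqrt 0" by (intro tendsto_intros dz)
    then have "(\<lambda>t. \<bar>\<theta> t i - mean N E \<sigma> (\<theta> t)\<bar>) \<longlonglongrightarrow> 0" unfolding d_def by simp
    then have dd: "(\<lambda>t. \<theta> t i - mean N E \<sigma> (\<theta> t)) \<longlonglongrightarrow> 0" by (simp add: tendsto_rabs_zero_iff)
    have "(\<lambda>t. (\<theta> t i - mean N E \<sigma> (\<theta> t)) + mean N E \<sigma> (\<theta> t)) \<longlonglongrightarrow> 0 + (S0 + suminf \<xi>) / Gam N E \<sigma>"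
      by (intro tendsto_add dd mlim)
    then show "(\<lambda>t. theta_state N E \<sigma> th0 e t i) \<longlonglongrightarrow>
          ((\<Sum>i<N. gam E \<sigma> i * th0 i) + (\<Sum>t. \<Sum>j<N. wt E j * e j t)) / Gam N E \<sigma>"
      unfolding \<theta>_def S0_def \<xi>_def by simp
  qed
qed




lemma abs_le_sq1: "\<bar>x::real\<bar> \<le> x^2 + 1"
proof (cases "\<bar>x\<bar> \<le> 1")
  case True then show ?thesis by (smt (verit) zero_le_power2)
next
  case False
  then have "\<bar>x\<bar> * 1 \<le> \<bar>x\<bar> * \<bar>x\<bar>" by (intro mult_left_mono) auto
  then show ?thesis by (simp add: power2_eq_square)
qed

lemma abs_le_sq_s: "0 < s \<Longrightarrow> \<bar>x::real\<bar> \<le> x^2 / (2 * s) + s / 2"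
proof -
  assume s: "0 < s"
  have "0 \<le> (\<bar>x\<bar> - s)^2" by simp
  then have "2 * s * \<bar>x\<bar> \<le> x^2 + s^2" by (simp add: power2_eq_square algebra_simps)
  then show ?thesis using s by (simp add: field_simps power2_eq_square)
qed

lemma laplace_moments:
  fixes M :: "'a measure" and X :: "'a \<Rightarrow> real" and s :: real
  assumes P: "prob_space M" and s: "0 < s"
    and D: "distributed M lborel X (\<lambda>x. ennreal (exp (- \<bar>x\<bar> / s) / (2 * s)))"
  shows "X \<in> borel_measurable M" "integrable M (\<lambda>\<omega>. (X \<omega>)^2)" "(\<integral>\<omega>. (X \<omega>)^2 \<partial>M) = 2 * s^2"
    "integrable M X" "(\<integral>\<omega>. X \<omega> \<partial>M) = 0" "(\<integral>\<omega>. \<bar>X \<omega>\<bar> \<partial>M) \<le> 3 * s / 2"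
proof -
  interpret prob_space M by (rule P)
  define f where "f x = exp (- \<bar>x\<bar> / s) / (2 * s)" for x
  have f0: "0 \<le> f x" for x unfolding f_def using s by simp
  have Df: "distributed M lborel X (\<lambda>x. ennreal (f x))" using D unfolding f_def .
  show Xm: "X \<in> borel_measurable M" using Df unfolding distributed_def by simp
  have fm: "f \<in> borel_measurable borel" unfolding f_def by measurable
  define g where "g x = erlang_density 0 (1 / s) x" for x
  have gm: "g \<in> borel_measurable borel" unfolding g_def erlang_density_def by measurable
  have g0: "0 \<le> g x" for x unfolding g_def erlang_density_def using s by simp
  have split: "f x * x^2 = g x * x^2 / 2 + g (-x) * (-x)^2 / 2" for x
  proof -
    consider "x < 0" | "x = 0" | "x > 0" by linarith
    then show ?thesis
    proof cases
      case 1 then show ?thesis unfolding f_def g_def erlang_density_def by simp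
    next
      case 2 then show ?thesis by simp
    next
      case 3 then show ?thesis unfolding f_def g_def erlang_density_def by simp
    qed
  qed
  have mom: "(\<integral>\<^sup>+ x. ennreal (g x * x^2) \<partial>lborel) = ennreal (2 * s^2)"
    using nn_integral_erlang_ith_moment[of "1/s" 0 2] s unfolding g_def
    by (simp add: power_divide)
  have half: "(\<integral>\<^sup>+ x. ennreal (g x * x^2 / 2) \<partial>lborel) = ennreal (s^2)"
  proof -
    have e: "ennreal (g x * x^2 / 2) = ennreal (1/2) * ennreal (g x * x^2)" for x
    proof -
      have "ennreal (1/2) * ennreal (g x * x^2) = ennreal (1/2 * (g x * x^2))" by (rule ennreal_mult'[symmetric]) simp
      then show ?thesis by simp
    qed
    have "(\<integral>\<^sup>+ x. ennreal (g x * x^2 / 2) \<partial>lborel) = (\<integral>\<^sup>+ x. ennreal (1/2) * ennreal (g x * x^2) \<partial>lborel)"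
      unfolding e ..
    also have "\<dots> = ennreal (1/2) * ennreal (2 * s^2)"
      by (subst nn_integral_cmult) (use gm mom in auto)
    also have "\<dots> = ennreal (1/2 * (2 * s^2))" by (rule ennreal_mult'[symmetric]) simp
    also have "\<dots> = ennreal (s^2)" by simp
    finally show ?thesis .
  qed
  have refl: "(\<integral>\<^sup>+ x. ennreal (g (-x) * (-x)^2 / 2) \<partial>lborel) = (\<integral>\<^sup>+ x. ennreal (g x * x^2 / 2) \<partial>lborel)"
    using nn_integral_real_affine[of "\<lambda>x. ennreal (g x * x^2 / 2)" "-1" 0] gm by simp
  have sq: "(\<integral>\<^sup>+ x. ennreal (f x) * ennreal (x^2) \<partial>lborel) = ennreal (2 * s^2)"
  proof -
    have pt: "ennreal (f x) * ennreal (x^2) = ennreal (g x * x^2 / 2) + ennreal (g (-x) * (-x)^2 / 2)" for x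
    proof -
      have "ennreal (f x) * ennreal (x^2) = ennreal (f x * x^2)" by (rule ennreal_mult'[symmetric, OF f0])
      also have "\<dots> = ennreal (g x * x^2 / 2 + g (-x) * (-x)^2 / 2)" by (simp only: split)
      also have "\<dots> = ennreal (g x * x^2 / 2) + ennreal (g (-x) * (-x)^2 / 2)"
        by (rule ennreal_plus) (simp_all add: g0)
      finally show ?thesis .
    qed
    have m1: "(\<lambda>x. ennreal (g x * x^2 / 2)) \<in> borel_measurable lborel"
      unfolding g_def erlang_density_def by measurable
    have m2: "(\<lambda>x. ennreal (g (-x) * (-x)^2 / 2)) \<in> borel_measurable lborel"
      unfolding g_def erlang_density_def by measurable
    have "(\<integral>\<^sup>+ x. ennreal (f x) * ennreal (x^2) \<partial>lborel)
        = (\<integral>\<^sup>+ x. ennreal (g x * x^2 / 2) + ennreal (g (-x) * (-x)^2 / 2) \<partial>lborel)"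
      unfolding pt ..
    also have "\<dots> = (\<integral>\<^sup>+ x. ennreal (g x * x^2 / 2) \<partial>lborel) + (\<integral>\<^sup>+ x. ennreal (g (-x) * (-x)^2 / 2) \<partial>lborel)"
      by (rule nn_integral_add[OF m1 m2])
    also have "\<dots> = ennreal (s^2) + ennreal (s^2)" unfolding refl half ..
    also have "\<dots> = ennreal (s^2 + s^2)" by (rule ennreal_plus[symmetric]) simp_all
    also have "\<dots> = ennreal (2 * s^2)" by simp
    finally show ?thesis .
  qed
  have nnM: "(\<integral>\<^sup>+ \<omega>. ennreal ((X \<omega>)^2) \<partial>M) = ennreal (2 * s^2)"
    using distributed_nn_integral[OF Df, of "\<lambda>x. ennreal (x^2)"] sq by simp
  have ii: "integrable M (\<lambda>\<omega>. (X \<omega>)^2) \<and> (\<integral>\<omega>. (X \<omega>)^2 \<partial>M) = 2 * s^2"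
    by (rule nn_integral_eq_integrable[THEN iffD1, OF _ _ _ nnM]) (use Xm in auto)
  then show sqi: "integrable M (\<lambda>\<omega>. (X \<omega>)^2)" and "(\<integral>\<omega>. (X \<omega>)^2 \<partial>M) = 2 * s^2" by auto
  show Xi: "integrable M X"
    by (rule Bochner_Integration.integrable_bound[where f = "\<lambda>\<omega>. (X \<omega>)^2 + 1"]) (use sqi Xm abs_le_sq1 in auto)
  have lin: "(\<integral>x. f x * x \<partial>lborel) = 0"
  proof -
    have "(\<integral>x. f x * x \<partial>lborel) = \<bar>-1\<bar> *\<^sub>R (\<integral>x. f (0 + -1 * x) * (0 + -1 * x) \<partial>lborel)"
      by (rule lborel_integral_real_affine) simp
    also have "\<dots> = (\<integral>x. - (f x * x) \<partial>lborel)" unfolding f_def by simp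
    also have "\<dots> = - (\<integral>x. f x * x \<partial>lborel)" by (rule integral_minus)
    finally show ?thesis by simp
  qed
  show "(\<integral>\<omega>. X \<omega> \<partial>M) = 0"
    using distributed_integral[OF Df, of "\<lambda>x. x"] lin f0 by simp
  have "(\<integral>\<omega>. \<bar>X \<omega>\<bar> \<partial>M) \<le> (\<integral>\<omega>. (X \<omega>)^2 / (2 * s) + s / 2 \<partial>M)"
    by (rule integral_mono) (use Xi sqi abs_le_sq_s[OF s] in auto)
  also have "\<dots> = (\<integral>\<omega>. (X \<omega>)^2 \<partial>M) / (2 * s) + s / 2"
    using sqi by (simp add: prob_space)
  also have "\<dots> = 3 * s / 2" using ii s by (simp add: power2_eq_square field_simps)
  finally show "(\<integral>\<omega>. \<bar>X \<omega>\<bar> \<partial>M) \<le> 3 * s / 2" .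
qed




lemma sum_sq_expect:
  fixes M :: "'a measure" and Z :: "'i \<Rightarrow> 'a \<Rightarrow> real" and a :: "'i \<Rightarrow> real"
  assumes P: "prob_space M" and ind: "prob_space.indep_vars M (\<lambda>_. borel) Z I"
    and J: "finite J" "J \<subseteq> I"
    and sqi: "\<And>p. p \<in> J \<Longrightarrow> integrable M (\<lambda>\<omega>. (Z p \<omega>)^2)"
    and zi: "\<And>p. p \<in> J \<Longrightarrow> integrable M (Z p)"
    and z0: "\<And>p. p \<in> J \<Longrightarrow> (\<integral>\<omega>. Z p \<omega> \<partial>M) = 0"
  shows "integrable M (\<lambda>\<omega>. (\<Sum>p\<in>J. a p * Z p \<omega>)^2)"
    "(\<integral>\<omega>. (\<Sum>p\<in>J. a p * Z p \<omega>)^2 \<partial>M) = (\<Sum>p\<in>J. (a p)^2 * (\<integral>\<omega>. (Z p \<omega>)^2 \<partial>M))"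
proof -
  interpret prob_space M by (rule P)
  have expand: "(\<Sum>p\<in>J. a p * Z p \<omega>)^2 = (\<Sum>p\<in>J. \<Sum>p'\<in>J. (a p * a p') * (Z p \<omega> * Z p' \<omega>))" for \<omega>
    unfolding power2_eq_square sum_product by (intro sum.cong refl) (simp add: algebra_simps)
  have pint: "integrable M (\<lambda>\<omega>. Z p \<omega> * Z p' \<omega>) \<and>
      (\<integral>\<omega>. Z p \<omega> * Z p' \<omega> \<partial>M) = (if p = p' then (\<integral>\<omega>. (Z p \<omega>)^2 \<partial>M) else 0)"
    if p: "p \<in> J" and p': "p' \<in> J" for p p'
  proof (cases "p = p'")
    case True
    then show ?thesis using sqi[OF p] by (simp add: power2_eq_square)
  next
    case False
    have ind2: "indep_vars (\<lambda>_. borel) Z {p, p'}"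
      by (rule indep_vars_subset[OF ind]) (use p p' J in auto)
    have ints: "\<And>i. i \<in> {p, p'} \<Longrightarrow> integrable M (Z i)" using zi p p' by auto
    have prod: "(\<Prod>i\<in>{p, p'}. Z i \<omega>) = Z p \<omega> * Z p' \<omega>" for \<omega> using False by simp
    have "integrable M (\<lambda>\<omega>. \<Prod>i\<in>{p, p'}. Z i \<omega>)"
      by (rule indep_vars_integrable[OF _ ind2 ints]) simp_all
    moreover have "(\<integral>\<omega>. (\<Prod>i\<in>{p, p'}. Z i \<omega>) \<partial>M) = (\<Prod>i\<in>{p, p'}. \<integral>\<omega>. Z i \<omega> \<partial>M)"
      by (rule indep_vars_lebesgue_integral[OF _ ind2 ints]) simp_all
    ultimately show ?thesis using False z0[OF p] unfolding prod by simp
  qed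
  have inner: "integrable M (\<lambda>\<omega>. \<Sum>p'\<in>J. (a p * a p') * (Z p \<omega> * Z p' \<omega>))" if p: "p \<in> J" for p
    using pint[OF p] by (intro Bochner_Integration.integrable_sum integrable_mult_right) auto
  show "integrable M (\<lambda>\<omega>. (\<Sum>p\<in>J. a p * Z p \<omega>)^2)"
    unfolding expand by (rule Bochner_Integration.integrable_sum) (rule inner)
  have "(\<integral>\<omega>. (\<Sum>p\<in>J. a p * Z p \<omega>)^2 \<partial>M)
      = (\<Sum>p\<in>J. \<Sum>p'\<in>J. (a p * a p') * (\<integral>\<omega>. Z p \<omega> * Z p' \<omega> \<partial>M))"
  proof -
    have "(\<integral>\<omega>. (\<Sum>p\<in>J. a p * Z p \<omega>)^2 \<partial>M) = (\<Sum>p\<in>J. \<integral>\<omega>. (\<Sum>p'\<in>J. (a p * a p') * (Z p \<omega> * Z p' \<omega>)) \<partial>M)"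
      unfolding expand by (rule Bochner_Integration.integral_sum) (rule inner)
    also have "\<dots> = (\<Sum>p\<in>J. \<Sum>p'\<in>J. (a p * a p') * (\<integral>\<omega>. Z p \<omega> * Z p' \<omega> \<partial>M))"
    proof (intro sum.cong refl)
      fix p assume p: "p \<in> J"
      have "(\<integral>\<omega>. (\<Sum>p'\<in>J. (a p * a p') * (Z p \<omega> * Z p' \<omega>)) \<partial>M)
          = (\<Sum>p'\<in>J. \<integral>\<omega>. (a p * a p') * (Z p \<omega> * Z p' \<omega>) \<partial>M)"
        by (rule Bochner_Integration.integral_sum) (intro integrable_mult_right, use pint[OF p] in blast)
      also have "\<dots> = (\<Sum>p'\<in>J. (a p * a p') * (\<integral>\<omega>. Z p \<omega> * Z p' \<omega> \<partial>M))"
        by (intro sum.cong refl integral_mult_right_zero)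
      finally show "(\<integral>\<omega>. (\<Sum>p'\<in>J. (a p * a p') * (Z p \<omega> * Z p' \<omega>)) \<partial>M)
          = (\<Sum>p'\<in>J. (a p * a p') * (\<integral>\<omega>. Z p \<omega> * Z p' \<omega> \<partial>M))" .
    qed
    finally show ?thesis .
  qed
  also have "\<dots> = (\<Sum>p\<in>J. \<Sum>p'\<in>J. if p = p' then (a p)^2 * (\<integral>\<omega>. (Z p \<omega>)^2 \<partial>M) else 0)"
  proof (intro sum.cong refl)
    fix p p' assume p: "p \<in> J" and p': "p' \<in> J"
    have h: "(\<integral>\<omega>. Z p \<omega> * Z p' \<omega> \<partial>M) = (if p = p' then (\<integral>\<omega>. (Z p \<omega>)^2 \<partial>M) else 0)"
      using pint[OF p p'] by blast
    show "(a p * a p') * (\<integral>\<omega>. Z p \<omega> * Z p' \<omega> \<partial>M) = (if p = p' then (a p)^2 * (\<integral>\<omega>. (Z p \<omega>)^2 \<partial>M) else 0)"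
      unfolding h by (simp add: power2_eq_square)
  qed
  also have "\<dots> = (\<Sum>p\<in>J. (a p)^2 * (\<integral>\<omega>. (Z p \<omega>)^2 \<partial>M))"
    using J(1) by (intro sum.cong refl) (simp add: sum.delta)
  finally show "(\<integral>\<omega>. (\<Sum>p\<in>J. a p * Z p \<omega>)^2 \<partial>M) = (\<Sum>p\<in>J. (a p)^2 * (\<integral>\<omega>. (Z p \<omega>)^2 \<partial>M))" .
qed





lemma meas_ennreal_abs: "f \<in> borel_measurable M \<Longrightarrow> (\<lambda>x. ennreal \<bar>f x :: real\<bar>) \<in> borel_measurable M"
  by measurable

lemma meas_ennreal_sq: "f \<in> borel_measurable M \<Longrightarrow> (\<lambda>x. ennreal ((f x :: real)^2)) \<in> borel_measurable M"
  by measurable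

lemma geom_partial_le: "0 \<le> x \<Longrightarrow> x < 1 \<Longrightarrow> (\<Sum>i<n. (x::real)^i) \<le> 1 / (1 - x)"
proof -
  assume x: "0 \<le> x" "x < 1"
  have "(\<Sum>i<n. x^i) = (1 - x^n) / (1 - x)" using x by (simp add: sum_gp_strict)
  also have "\<dots> \<le> 1 / (1 - x)" using x by (intro divide_right_mono) auto
  finally show ?thesis .
qed

theorem mainTheorem10:
  fixes N :: nat and E :: "(nat \<times> nat) set" and lams :: "real list"
    and \<sigma> :: "nat \<Rightarrow> real" and c q :: real
    and M :: "'a measure" and \<eta> :: "nat \<Rightarrow> nat \<Rightarrow> 'a \<Rightarrow> real"
    and th0 :: "nat \<Rightarrow> real" and b :: real
  assumes graph: "undirected_graph N E" and N2: "2 \<le> N"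
    and eig: "laplacian_eigenvalues N E lams"
    and sigma: "\<forall>i<N. 0 < \<sigma> i \<and> \<sigma> i < 1"
    and c: "c > 0" and q: "0 < q" "q < 1"
    and lam2: "lams ! 1 > 0"
    and cond: "lams ! (N - 1) * (Max ((\<lambda>i. \<sigma> i / (real (card (nbr E i)) + 1)) ` {0..<N}))^2
               < 2 * Min ((\<lambda>i. \<sigma> i / (real (card (nbr E i)) + 1)) ` {0..<N})"
    and P: "prob_space M"
    and noise_indep: "prob_space.indep_vars M (\<lambda>_. borel) (\<lambda>p. \<eta> (fst p) (snd p)) ({0..<N} \<times> UNIV)"
    and noise_distr: "\<forall>i<N. \<forall>t. distributed M lborel (\<eta> i t)
                        (\<lambda>x. ennreal (exp (- \<bar>x\<bar> / (c * q ^ t)) / (2 * c * q ^ t)))"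
    and b: "0 < b" "b < 1"
  shows "\<exists>A\<in>sets M. measure M A \<ge> 1 - b \<and>
           (\<forall>\<omega>\<in>A. \<exists>\<theta>s. (\<forall>i<N. (\<lambda>t. theta_state N E \<sigma> th0 (\<lambda>j t. \<eta> j t \<omega>) t i) \<longlonglongrightarrow> \<theta>s) \<and>
              \<bar>\<theta>s - (\<Sum>i<N. ((real (card (nbr E i)) + 1) / \<sigma> i) * th0 i)
                     / (\<Sum>i<N. (real (card (nbr E i)) + 1) / \<sigma> i)\<bar>
              \<le> sqrt (2 * ((\<Sum>i<N. (real (card (nbr E i)) + 1)^2)
                           / (\<Sum>i<N. (real (card (nbr E i)) + 1) / \<sigma> i)^2)) * c
                 / sqrt (b * (1 - q^2)))"
proof -
  interpret prob_space M by (rule P)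
  have Npos: "0 < N" using N2 by simp
  have conn: "\<forall>i<N. \<forall>j<N. (i, j) \<in> E\<^sup>*"
    using connected_from_eig[OF graph N2 eig lam2] by blast
  define s where "s t = c * q ^ t" for t
  have s0: "0 < s t" for t unfolding s_def using c q by simp
  have Dj: "distributed M lborel (\<eta> j t) (\<lambda>x. ennreal (exp (- \<bar>x\<bar> / s t) / (2 * s t)))" if "j < N" for j t
    using noise_distr that unfolding s_def by (simp add: mult.assoc)
  note LM = laplace_moments[OF P s0 Dj]
  have meas: "\<eta> j t \<in> borel_measurable M" if "j < N" for j t using LM(1)[OF that] .
  define Y where "Y \<omega> = (\<Sum>t. \<Sum>j<N. ennreal \<bar>\<eta> j t \<omega>\<bar>)" for \<omega>
  have mt: "(\<lambda>\<omega>. \<Sum>j<N. ennreal \<bar>\<eta> j t \<omega>\<bar>) \<in> borel_measurable M" for t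
    by (intro borel_measurable_sum meas_ennreal_abs meas) auto
  have Ym: "Y \<in> borel_measurable M" unfolding Y_def by (rule borel_measurable_suminf_order) (rule mt)
  have absint: "(\<integral>\<^sup>+\<omega>. ennreal \<bar>\<eta> j t \<omega>\<bar> \<partial>M) \<le> ennreal (3 * s t / 2)" if j: "j < N" for j t
  proof -
    have "(\<integral>\<^sup>+\<omega>. ennreal \<bar>\<eta> j t \<omega>\<bar> \<partial>M) = ennreal (\<integral>\<omega>. \<bar>\<eta> j t \<omega>\<bar> \<partial>M)"
      by (rule nn_integral_eq_integral) (use LM(4)[OF j] in auto)
    then show ?thesis using ennreal_leI[OF LM(6)[OF j, of t]] by simp
  qed
  have "(\<integral>\<^sup>+\<omega>. Y \<omega> \<partial>M) = (\<Sum>t. \<Sum>j<N. (\<integral>\<^sup>+\<omega>. ennreal \<bar>\<eta> j t \<omega>\<bar> \<partial>M))"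
    unfolding Y_def
    by (subst nn_integral_suminf[OF mt]) (intro suminf_cong nn_integral_sum, intro meas_ennreal_abs meas, auto)
  also have "\<dots> \<le> (\<Sum>t. \<Sum>j<N. ennreal (3 * s t / 2))"
    by (intro suminf_le summableI sum_mono absint) auto
  also have "\<dots> = (\<Sum>t. ennreal (real N * (3 * s t / 2)))"
  proof (intro suminf_cong)
    fix t
    have "(\<Sum>j<N. ennreal (3 * s t / 2)) = ennreal (\<Sum>j<N. 3 * s t / 2)"
      by (rule sum_ennreal) (use s0[of t] in simp)
    then show "(\<Sum>j<N. ennreal (3 * s t / 2)) = ennreal (real N * (3 * s t / 2))" by simp
  qed
  also have "\<dots> = ennreal (\<Sum>t. real N * (3 * s t / 2))"
  proof (rule suminf_ennreal2)
    show "0 \<le> real N * (3 * s t / 2)" for t using s0[of t] by simp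
    show "summable (\<lambda>t. real N * (3 * s t / 2))"
      unfolding s_def using q by (intro summable_mult summable_divide summable_geometric) auto
  qed
  finally have "(\<integral>\<^sup>+\<omega>. Y \<omega> \<partial>M) \<noteq> \<infinity>" by (auto simp: top_unique)
  then have AEY: "AE \<omega> in M. Y \<omega> \<noteq> \<infinity>" by (rule nn_integral_noteq_infinite[OF Ym])
  define B1 where "B1 = {\<omega>\<in>space M. \<not> Y \<omega> \<noteq> \<infinity>}"
  have B1s: "B1 \<in> sets M" unfolding B1_def using Ym by measurable
  have B1z: "emeasure M B1 = 0" using AE_iff_measurable[OF B1s B1_def[symmetric]] AEY by simp
  have B1m: "measure M B1 = 0" using B1z by (simp add: emeasure_eq_measure)
  define Xn where "Xn n \<omega> = (\<Sum>t<n. \<Sum>j<N. wt E j * \<eta> j t \<omega>)" for n \<omega>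
  define V where "V = 2 * c^2 * (\<Sum>j<N. (wt E j)^2) / (1 - q^2)"
  have q2: "0 \<le> q^2" "q^2 < 1" using q by (auto simp: power_less_one_iff)
  have Vpos: "0 < V"
  proof -
    have "0 < (\<Sum>j<N. (wt E j)^2)" using Npos by (intro sum_pos) (auto simp: wt_def)
    then show ?thesis unfolding V_def using c q2 by simp
  qed
  define Z where "Z p \<omega> = \<eta> (fst p) (snd p) \<omega>" for p \<omega>
  have Zeq: "Z p = \<eta> (fst p) (snd p)" for p by (rule ext) (simp add: Z_def)
  have Xpair: "Xn n \<omega> = (\<Sum>p\<in>{..<N} \<times> {..<n}. wt E (fst p) * Z p \<omega>)" for n \<omega>
    unfolding Xn_def Z_def by (subst sum.swap) (simp add: sum.cartesian_product split_beta)
  have XM: "integrable M (\<lambda>\<omega>. (Xn n \<omega>)^2) \<and> (\<integral>\<omega>. (Xn n \<omega>)^2 \<partial>M) \<le> V" for n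
  proof -
    have ind: "indep_vars (\<lambda>_. borel) Z ({0..<N} \<times> UNIV)" using noise_indep unfolding Z_def by simp
    have J: "finite ({..<N} \<times> {..<n})" "{..<N} \<times> {..<n} \<subseteq> {0..<N} \<times> UNIV" by auto
    have pj: "fst p < N" if "p \<in> {..<N} \<times> {..<n}" for p using that by auto
    note SS = sum_sq_expect[OF P ind J, of "\<lambda>p. wt E (fst p)"]
    have int: "integrable M (\<lambda>\<omega>. (\<Sum>p\<in>{..<N} \<times> {..<n}. wt E (fst p) * Z p \<omega>)^2)"
      by (rule SS(1)) (use LM pj in \<open>auto simp: Zeq\<close>)
    have "(\<integral>\<omega>. (\<Sum>p\<in>{..<N} \<times> {..<n}. wt E (fst p) * Z p \<omega>)^2 \<partial>M)
        = (\<Sum>p\<in>{..<N} \<times> {..<n}. (wt E (fst p))^2 * (\<integral>\<omega>. (Z p \<omega>)^2 \<partial>M))"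
      by (rule SS(2)) (use LM pj in \<open>auto simp: Zeq\<close>)
    also have "\<dots> = (\<Sum>p\<in>{..<N} \<times> {..<n}. (wt E (fst p))^2 * (2 * c^2 * (q^2)^(snd p)))"
      using LM pj by (intro sum.cong refl) (auto simp: Zeq s_def power_mult_distrib power_mult[symmetric] mult.commute)
    also have "\<dots> = (\<Sum>j<N. (wt E j)^2 * (2 * c^2) * (\<Sum>t<n. (q^2)^t))"
    proof -
      have "(\<Sum>j<N. (wt E j)^2 * (2 * c^2) * (\<Sum>t<n. (q^2)^t))
          = (\<Sum>j<N. \<Sum>t<n. (wt E j)^2 * (2 * c^2 * (q^2)^t))"
        by (simp add: sum_distrib_left mult.assoc)
      also have "\<dots> = (\<Sum>p\<in>{..<N} \<times> {..<n}. (wt E (fst p))^2 * (2 * c^2 * (q^2)^(snd p)))"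
        by (simp add: sum.cartesian_product split_beta)
      finally show ?thesis by simp
    qed
    also have "\<dots> \<le> (\<Sum>j<N. (wt E j)^2 * (2 * c^2) * (1 / (1 - q^2)))"
      using geom_partial_le[OF q2] by (intro sum_mono mult_left_mono) auto
    also have "\<dots> = V" unfolding V_def by (simp add: sum_distrib_right[symmetric] sum_divide_distrib[symmetric] mult.commute)
    finally show ?thesis using int unfolding Xpair by simp
  qed
  define W where "W \<omega> = liminf (\<lambda>n. ennreal ((Xn n \<omega>)^2))" for \<omega>
  have Xm: "(\<lambda>\<omega>. (Xn n \<omega>)^2) \<in> borel_measurable M" for n using XM[of n] by auto
  have Xem: "(\<lambda>\<omega>. ennreal ((Xn n \<omega>)^2)) \<in> borel_measurable M" for n
    using Xm[of n] by simp
  have Wm: "W \<in> borel_measurable M" unfolding W_def by (rule borel_measurable_liminf) (rule Xem)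
  have "(\<integral>\<^sup>+\<omega>. W \<omega> \<partial>M) \<le> liminf (\<lambda>n. \<integral>\<^sup>+\<omega>. ennreal ((Xn n \<omega>)^2) \<partial>M)"
    unfolding W_def by (rule nn_integral_liminf) (rule Xem)
  also have "\<dots> \<le> limsup (\<lambda>n. \<integral>\<^sup>+\<omega>. ennreal ((Xn n \<omega>)^2) \<partial>M)"
    by (rule Liminf_le_Limsup) simp
  also have "\<dots> \<le> ennreal V"
  proof (rule Limsup_bounded, rule always_eventually, rule allI)
    fix n
    have "(\<integral>\<^sup>+\<omega>. ennreal ((Xn n \<omega>)^2) \<partial>M) = ennreal (\<integral>\<omega>. (Xn n \<omega>)^2 \<partial>M)"
      by (rule nn_integral_eq_integral) (use XM[of n] in auto)
    then show "(\<integral>\<^sup>+\<omega>. ennreal ((Xn n \<omega>)^2) \<partial>M) \<le> ennreal V" using ennreal_leI[OF XM[of n, THEN conjunct2]] by simp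
  qed
  finally have intW: "(\<integral>\<^sup>+\<omega>. W \<omega> \<partial>M) \<le> ennreal V" .
  define \<kappa> where "\<kappa> = ennreal (b / V)"
  define B2 where "B2 = {\<omega>\<in>space M. 1 \<le> \<kappa> * W \<omega>}"
  have B2s: "B2 \<in> sets M" unfolding B2_def using Wm by measurable
  have "emeasure M B2 \<le> \<kappa> * (\<integral>\<^sup>+\<omega>. W \<omega> * indicator (space M) \<omega> \<partial>M)"
    unfolding B2_def by (rule nn_integral_Markov_inequality) (use Wm in auto)
  also have "(\<integral>\<^sup>+\<omega>. W \<omega> * indicator (space M) \<omega> \<partial>M) = (\<integral>\<^sup>+\<omega>. W \<omega> \<partial>M)"
    by (intro nn_integral_cong) simp
  also have "\<kappa> * (\<integral>\<^sup>+\<omega>. W \<omega> \<partial>M) \<le> \<kappa> * ennreal V" using intW by (rule mult_left_mono) simp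
  also have "\<dots> = ennreal b" unfolding \<kappa>_def using Vpos b by (simp add: ennreal_mult'[symmetric])
  finally have "emeasure M B2 \<le> ennreal b" .
  then have B2m: "measure M B2 \<le> b" using b by (simp add: emeasure_eq_measure)
  define A where "A = {\<omega>\<in>space M. Y \<omega> \<noteq> \<infinity> \<and> \<not> 1 \<le> \<kappa> * W \<omega>}"
  have As: "A \<in> sets M" unfolding A_def using Ym Wm by measurable
  have compl: "space M - A \<subseteq> B1 \<union> B2" unfolding A_def B1_def B2_def by auto
  have "measure M (space M - A) \<le> measure M (B1 \<union> B2)"
    by (rule finite_measure_mono[OF compl]) (use B1s B2s in auto)
  also have "\<dots> \<le> measure M B1 + measure M B2" by (rule measure_Un_le[OF B1s B2s])
  finally have "measure M (space M - A) \<le> b" using B1m B2m by simp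
  then have Aprob: "measure M A \<ge> 1 - b" using prob_compl[OF As] by simp
  show ?thesis
  proof (intro bexI[OF _ As] conjI Aprob ballI)
    fix \<omega> assume \<omega>A: "\<omega> \<in> A"
    then have Y\<omega>: "Y \<omega> \<noteq> \<infinity>" and W\<omega>: "\<not> 1 \<le> \<kappa> * W \<omega>" unfolding A_def by auto
    have summ: "\<forall>j<N. summable (\<lambda>t. \<bar>\<eta> j t \<omega>\<bar>)"
    proof (intro allI impI)
      fix j assume j: "j < N"
      have "(\<Sum>t. ennreal \<bar>\<eta> j t \<omega>\<bar>) \<le> Y \<omega>"
        unfolding Y_def
        by (intro suminf_le summableI member_le_sum[where f = "\<lambda>j. ennreal \<bar>\<eta> j t \<omega>\<bar>" for t]) (use j in auto)
      then have "(\<Sum>t. ennreal \<bar>\<eta> j t \<omega>\<bar>) \<noteq> \<infinity>" using Y\<omega> by (auto simp: top_unique)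
      then show "summable (\<lambda>t. \<bar>\<eta> j t \<omega>\<bar>)" using summable_suminf_not_top[of "\<lambda>t. \<bar>\<eta> j t \<omega>\<bar>"] by simp
    qed
    note CS1 = consensus(1)[OF graph sigma Npos conn summ]
    note CS2 = consensus(2)[OF graph sigma Npos conn summ, of th0]
    define X where "X = (\<Sum>t. \<Sum>j<N. wt E j * \<eta> j t \<omega>)"
    define S0 where "S0 = (\<Sum>i<N. gam E \<sigma> i * th0 i)"
    have G: "0 < Gam N E \<sigma>" by (rule Gam_pos[OF graph sigma Npos])
    have Xlim: "(\<lambda>n. Xn n \<omega>) \<longlonglongrightarrow> X"
      unfolding Xn_def X_def by (rule summable_LIMSEQ[OF CS1])
    have "(\<lambda>n. ennreal ((Xn n \<omega>)^2)) \<longlonglongrightarrow> ennreal (X^2)"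
      by (intro tendsto_ennrealI tendsto_power Xlim)
    then have "W \<omega> = ennreal (X^2)" unfolding W_def by (intro lim_imp_Liminf) simp_all
    then have "\<not> 1 \<le> ennreal (b / V * X^2)" using W\<omega> Vpos b unfolding \<kappa>_def
      by (simp add: ennreal_mult'[symmetric])
    then have "b / V * X^2 < 1" by simp
    then have X2: "X^2 < V / b" using b Vpos by (simp add: field_simps)
    show "\<exists>\<theta>s. (\<forall>i<N. (\<lambda>t. theta_state N E \<sigma> th0 (\<lambda>j t. \<eta> j t \<omega>) t i) \<longlonglongrightarrow> \<theta>s) \<and>
              \<bar>\<theta>s - (\<Sum>i<N. ((real (card (nbr E i)) + 1) / \<sigma> i) * th0 i)
                     / (\<Sum>i<N. (real (card (nbr E i)) + 1) / \<sigma> i)\<bar>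
              \<le> sqrt (2 * ((\<Sum>i<N. (real (card (nbr E i)) + 1)^2)
                           / (\<Sum>i<N. (real (card (nbr E i)) + 1) / \<sigma> i)^2)) * c
                 / sqrt (b * (1 - q^2))"
    proof (intro exI conjI)
      show "\<forall>i<N. (\<lambda>t. theta_state N E \<sigma> th0 (\<lambda>j t. \<eta> j t \<omega>) t i) \<longlonglongrightarrow> (S0 + X) / Gam N E \<sigma>"
        using CS2 unfolding S0_def X_def .
      have eGam: "(\<Sum>i<N. (real (card (nbr E i)) + 1) / \<sigma> i) = Gam N E \<sigma>"
        unfolding Gam_def gam_def wt_def ..
      have eS0: "(\<Sum>i<N. ((real (card (nbr E i)) + 1) / \<sigma> i) * th0 i) = S0"
        unfolding S0_def gam_def wt_def ..
      have eW: "(\<Sum>i<N. (real (card (nbr E i)) + 1)^2) = (\<Sum>j<N. (wt E j)^2)"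
        unfolding wt_def ..
      define R where "R = sqrt (2 * ((\<Sum>j<N. (wt E j)^2) / (Gam N E \<sigma>)^2)) * c / sqrt (b * (1 - q^2))"
      have nn0: "0 \<le> 2 * ((\<Sum>j<N. (wt E j)^2) / (Gam N E \<sigma>)^2)"
        by (intro mult_nonneg_nonneg divide_nonneg_nonneg sum_nonneg) auto
      have R0: "0 \<le> R" unfolding R_def using c b q2 nn0 by (intro divide_nonneg_nonneg mult_nonneg_nonneg) auto
      have bq: "0 < b * (1 - q^2)" using b q2 by simp
      have R2: "R^2 = V / (b * (Gam N E \<sigma>)^2)"
      proof -
        have nn: "0 \<le> 2 * ((\<Sum>j<N. (wt E j)^2) / (Gam N E \<sigma>)^2)"
          by (intro mult_nonneg_nonneg divide_nonneg_nonneg sum_nonneg) auto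
        have "R^2 = 2 * ((\<Sum>j<N. (wt E j)^2) / (Gam N E \<sigma>)^2) * c^2 / (b * (1 - q^2))"
          unfolding R_def using nn bq by (simp add: power_divide power_mult_distrib)
        also have "\<dots> = V / (b * (Gam N E \<sigma>)^2)"
          unfolding V_def using G bq q2 b by (simp add: field_simps)
        finally show ?thesis .
      qed
      have diff: "(S0 + X) / Gam N E \<sigma> - S0 / Gam N E \<sigma> = X / Gam N E \<sigma>"
        by (simp add: add_divide_distrib)
      have "\<bar>X / Gam N E \<sigma>\<bar>^2 = X^2 / (Gam N E \<sigma>)^2" by (simp add: power_divide)
      also have "\<dots> \<le> V / b / (Gam N E \<sigma>)^2" using X2 G by (intro divide_right_mono) auto
      also have "\<dots> = R^2" unfolding R2 by simp
      finally have "\<bar>X / Gam N E \<sigma>\<bar> \<le> R" by (rule power2_le_imp_le[OF _ R0])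
      then show "\<bar>(S0 + X) / Gam N E \<sigma> - (\<Sum>i<N. ((real (card (nbr E i)) + 1) / \<sigma> i) * th0 i)
                     / (\<Sum>i<N. (real (card (nbr E i)) + 1) / \<sigma> i)\<bar>
              \<le> sqrt (2 * ((\<Sum>i<N. (real (card (nbr E i)) + 1)^2)
                           / (\<Sum>i<N. (real (card (nbr E i)) + 1) / \<sigma> i)^2)) * c
                 / sqrt (b * (1 - q^2))"
        unfolding eGam eS0 eW diff R_def[symmetric] .
    qed
  qed
qed


end
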